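(* Consider the system of ordinary differential equations for $(x(t),h(t),n(t))$: \[ \frac{dx}{dt} = x(1-x)S(h) + \mu(h)(1-x) - \nu x,\qquad \frac{dh}{dt} = \alpha n(1+\beta x)\,G(h) - \Gamma(n)(h-1),\qquad \frac{dn}{dt} = r n(1-n) - D(h,x)\,n, \] where \[ S(h) = \frac{s_0}{1+e^{-\lambda(h-h_c)}} - c + \varphi\, d_S(h),\quad d_S(h) = \frac{d_{\max} h^m}{h_{50}^m + h^m},\quad \mu(h)=\mu_0 h^p, \] \[ G(h) = \frac{K_g}{K_g+h},\quad \Gamma(n) = \frac{\gamma_0}{1+\eta n},\quad D(h,x) = (1-\varphi x)\,d_S(h), \] and all parameters $s_0,\lambda,h_c,c,\varphi,d_{\max},h_{50},m,\mu_0,p,\nu,\alpha,\beta,K_g,\gamma_0,\eta,r$ are positive. Let $x^*\in(0,1)$ be the unique solution in $(0,1)$ of $x(1-x)S(1) + \mu_0(1-x) - \nu x = 0$, so that $E_0 = (x^*,1,0)$ is an equilibrium of the system. Define $\mathcal{R}_0 = \dfrac{r}{D(1,x^* )}$. Then $E_0$ is locally asymptotically stable if $\mathcal{R}_0<1$ and unstable if $\mathcal{R}_0>1$.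
   Context: The model describes a tumor: $x$ is the fraction of acid-resistant cells, $h$ is the normalized proton concentration ($h=1$ physiological), $n$ is normalized tumor density. $E_0$ is the tumor-extinction equilibrium and $\mathcal{R}_0$ is called the basic reproduction number of the tumor cell population.
   Formalization: Both clauses assume in addition that $D(1,x^* ) > 0$, that is $\varphi x^* < 1$. The statement above fails without it. *)

theory Defs
  imports "HOL-Analysis.Analysis"
begin

definition is_solution :: "('a::real_normed_vector \<Rightarrow> 'a) \<Rightarrow> real set \<Rightarrow> (real \<Rightarrow> 'a) \<Rightarrow> bool" where
  "is_solution F I y \<longleftrightarrow> (\<forall>t\<in>I. (y has_vector_derivative F (y t)) (at t within I))"

text \<open>Lyapunov stability of an equilibrium E (quantifying over all solutions on
  arbitrary compact time intervals [0,T], so that no global existence is presupposed).\<close>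
definition lyapunov_stable :: "('a::real_normed_vector \<Rightarrow> 'a) \<Rightarrow> 'a \<Rightarrow> bool" where
  "lyapunov_stable F E \<longleftrightarrow>
     (\<forall>\<epsilon>>0. \<exists>\<delta>>0. \<forall>T y. T \<ge> 0 \<and> is_solution F {0..T} y \<and> dist (y 0) E < \<delta>
        \<longrightarrow> (\<forall>t\<in>{0..T}. dist (y t) E < \<epsilon>))"

definition locally_attractive :: "('a::real_normed_vector \<Rightarrow> 'a) \<Rightarrow> 'a \<Rightarrow> bool" where
  "locally_attractive F E \<longleftrightarrow>
     (\<exists>\<delta>>0. \<forall>y. is_solution F {0..} y \<and> dist (y 0) E < \<delta> \<longrightarrow> (y \<longlongrightarrow> E) at_top)"

definition locally_asymptotically_stable :: "('a::real_normed_vector \<Rightarrow> 'a) \<Rightarrow> 'a \<Rightarrow> bool" where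
  "locally_asymptotically_stable F E \<longleftrightarrow> lyapunov_stable F E \<and> locally_attractive F E"

definition unstable :: "('a::real_normed_vector \<Rightarrow> 'a) \<Rightarrow> 'a \<Rightarrow> bool" where
  "unstable F E \<longleftrightarrow> \<not> lyapunov_stable F E"

end

theory Submission
  imports Defs
begin

lemma first_exit:
  fixes w :: "real \<Rightarrow> real"
  assumes cw: "continuous_on {0..T} w" and w0: "w 0 < R" and T: "T \<ge> 0"
    and P: "\<And>s. 0 < s \<Longrightarrow> s \<le> T \<Longrightarrow> (\<forall>t\<in>{0..<s}. w t < R) \<Longrightarrow> w s < R"
  shows "\<forall>t\<in>{0..T}. w t < R"
proof (rule ccontr)
  assume contra: "\<not> (\<forall>t\<in>{0..T}. w t < R)"
  define B where "B = {0..T} \<inter> w -` {R..}"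
  have cB: "closed B" unfolding B_def by (rule continuous_closed_preimage[OF cw]) auto
  have ne: "B \<noteq> {}" using contra by (auto simp: B_def not_less)
  have bb: "bdd_below B" by (auto simp: B_def bdd_below_def)
  define t1 where "t1 = Inf B"
  have t1B: "t1 \<in> B" unfolding t1_def by (rule closed_contains_Inf[OF ne bb cB])
  have low: "t1 \<le> t" if "t \<in> B" for t unfolding t1_def by (rule cInf_lower[OF that bb])
  have "t1 \<noteq> 0" using t1B w0 by (auto simp: B_def)
  then have t1p: "t1 > 0" using t1B by (auto simp: B_def)
  have "\<forall>t\<in>{0..<t1}. w t < R"
  proof
    fix t assume t: "t \<in> {0..<t1}"
    then have "t \<notin> B" using low by force
    moreover have "t \<le> T" using t t1B by (auto simp: B_def)
    ultimately show "w t < R" using t by (auto simp: B_def)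
  qed
  then have "w t1 < R" using P[OF t1p] t1B by (auto simp: B_def)
  then show False using t1B by (auto simp: B_def)
qed

lemma closure_le:
  fixes w :: "real \<Rightarrow> real"
  assumes cw: "continuous_on {0..s} w" and s: "s > 0" and lt: "\<forall>t\<in>{0..<s}. w t < R"
  shows "\<forall>t\<in>{0..s}. w t \<le> R"
proof -
  define C where "C = {0..s} \<inter> w -` {..R}"
  have cC: "closed C" unfolding C_def by (rule continuous_closed_preimage[OF cw]) auto
  have "{0..<s} \<subseteq> C" using lt by (auto simp: C_def less_imp_le)
  then have "closure {0..<s} \<subseteq> C" using cC by (rule closure_minimal)
  then have "{0..s} \<subseteq> C" using s by simp
  then show ?thesis by (auto simp: C_def)
qed

lemma lip3:
  fixes f A1 A2 A3 :: "real \<times> real \<times> real \<Rightarrow> real"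
  assumes K: "compact K" "convex K"
    and d: "\<And>z. z \<in> K \<Longrightarrow> (f has_derivative (\<lambda>d. A1 z * fst d + A2 z * fst (snd d) + A3 z * snd (snd d))) (at z)"
    and c1: "continuous_on K A1" and c2: "continuous_on K A2" and c3: "continuous_on K A3"
  shows "\<exists>C. \<forall>a\<in>K. \<forall>b\<in>K. \<bar>f a - f b\<bar> \<le> C * norm (a - b)"
proof -
  have bnd: "\<exists>B\<ge>0. \<forall>z\<in>K. \<bar>A z\<bar> \<le> B" if "continuous_on K A" for A :: "real \<times> real \<times> real \<Rightarrow> real"
  proof -
    have "bounded (A ` K)" by (rule compact_imp_bounded[OF compact_continuous_image[OF that K(1)]])
    then obtain B where "\<forall>x\<in>A ` K. norm x \<le> B" by (auto simp: bounded_iff)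
    then show ?thesis by (intro exI[of _ "\<bar>B\<bar>"]) auto
  qed
  obtain B1 where B1: "B1 \<ge> 0" "\<forall>z\<in>K. \<bar>A1 z\<bar> \<le> B1" using bnd[OF c1] by blast
  obtain B2 where B2: "B2 \<ge> 0" "\<forall>z\<in>K. \<bar>A2 z\<bar> \<le> B2" using bnd[OF c2] by blast
  obtain B3 where B3: "B3 \<ge> 0" "\<forall>z\<in>K. \<bar>A3 z\<bar> \<le> B3" using bnd[OF c3] by blast
  have "(B1 + B2 + B3)-lipschitz_on K f"
  proof (rule bounded_derivative_imp_lipschitz)
    show "(f has_derivative (\<lambda>d. A1 z * fst d + A2 z * fst (snd d) + A3 z * snd (snd d))) (at z within K)"
      if "z \<in> K" for z using d[OF that] by (rule has_derivative_at_withinI)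
    show "convex K" by fact
    show "0 \<le> B1 + B2 + B3" using B1 B2 B3 by simp
    fix z assume z: "z \<in> K"
    show "onorm (\<lambda>d. A1 z * fst d + A2 z * fst (snd d) + A3 z * snd (snd d)) \<le> B1 + B2 + B3"
    proof (rule onorm_le)
      fix d :: "real \<times> real \<times> real"
      obtain d1 d2 d3 where dd: "d = (d1, d2, d3)" by (cases d) auto
      have n1: "\<bar>fst d\<bar> \<le> norm d" using norm_fst_le[of d1 "(d2,d3)"] by (simp add: dd)
      have n2: "\<bar>fst (snd d)\<bar> \<le> norm d" using norm_fst_le[of d2 d3] norm_snd_le[of "(d2,d3)" d1] by (simp add: dd)
      have n3: "\<bar>snd (snd d)\<bar> \<le> norm d" using norm_snd_le[of d3 d2] norm_snd_le[of "(d2,d3)" d1] by (simp add: dd)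
      have "norm (A1 z * fst d + A2 z * fst (snd d) + A3 z * snd (snd d))
          \<le> \<bar>A1 z\<bar> * \<bar>fst d\<bar> + \<bar>A2 z\<bar> * \<bar>fst (snd d)\<bar> + \<bar>A3 z\<bar> * \<bar>snd (snd d)\<bar>"
        by (simp add: abs_mult[symmetric])
      also have "\<dots> \<le> B1 * norm d + B2 * norm d + B3 * norm d"
        using B1 B2 B3 z n1 n2 n3 by (intro add_mono mult_mono) auto
      finally show "norm (A1 z * fst d + A2 z * fst (snd d) + A3 z * snd (snd d)) \<le> (B1 + B2 + B3) * norm d"
        by (simp add: distrib_right)
    qed
  qed
  then show ?thesis by (auto simp: lipschitz_on_def dist_norm)
qed

lemma comp_le:
  fixes z :: "real \<times> real \<times> real"
  shows "\<bar>fst z\<bar> \<le> norm z" "\<bar>fst (snd z)\<bar> \<le> norm z" "\<bar>snd (snd z)\<bar> \<le> norm z"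
proof -
  obtain d1 d2 d3 where dd: "z = (d1, d2, d3)" by (cases z) auto
  show "\<bar>fst z\<bar> \<le> norm z" using norm_fst_le[of d1 "(d2,d3)"] by (simp add: dd)
  show "\<bar>fst (snd z)\<bar> \<le> norm z" using norm_fst_le[of d2 d3] norm_snd_le[of "(d2,d3)" d1] by (simp add: dd)
  show "\<bar>snd (snd z)\<bar> \<le> norm z" using norm_snd_le[of d3 d2] norm_snd_le[of "(d2,d3)" d1] by (simp add: dd)
qed

lemma norm3_le:
  fixes z :: "real \<times> real \<times> real"
  shows "norm z \<le> \<bar>fst z\<bar> + \<bar>fst (snd z)\<bar> + \<bar>snd (snd z)\<bar>"
proof -
  obtain d1 d2 d3 where dd: "z = (d1, d2, d3)" by (cases z) auto
  have "norm (d1, d2, d3) \<le> norm d1 + norm (d2, d3)" by (rule norm_Pair_le)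
  also have "norm (d2, d3) \<le> norm d2 + norm d3" by (rule norm_Pair_le)
  finally show ?thesis by (simp add: dd add.assoc)
qed

lemma norm3_sq:
  fixes z :: "real \<times> real \<times> real"
  shows "(norm z)^2 = (fst z)^2 + (fst (snd z))^2 + (snd (snd z))^2"
proof -
  obtain d1 d2 d3 where dd: "z = (d1, d2, d3)" by (cases z) auto
  show ?thesis by (simp add: dd norm_Pair)
qed

lemma vd_comps:
  fixes y :: "real \<Rightarrow> real \<times> real \<times> real"
  assumes "(y has_vector_derivative v) F"
  shows "((\<lambda>t. fst (y t)) has_real_derivative fst v) F"
    "((\<lambda>t. fst (snd (y t))) has_real_derivative fst (snd v)) F"
    "((\<lambda>t. snd (snd (y t))) has_real_derivative snd (snd v)) F"
proof -
  have h: "(y has_derivative (\<lambda>s. s *\<^sub>R v)) F" using assms by (simp add: has_vector_derivative_def)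
  have "((\<lambda>t. fst (y t)) has_derivative (\<lambda>s. fst (s *\<^sub>R v))) F" by (rule has_derivative_fst[OF h])
  then show "((\<lambda>t. fst (y t)) has_real_derivative fst v) F"
    unfolding has_field_derivative_def by (rule has_derivative_eq_rhs) (auto simp: fun_eq_iff)
  have "((\<lambda>t. fst (snd (y t))) has_derivative (\<lambda>s. fst (snd (s *\<^sub>R v)))) F"
    by (rule has_derivative_fst[OF has_derivative_snd[OF h]])
  then show "((\<lambda>t. fst (snd (y t))) has_real_derivative fst (snd v)) F"
    unfolding has_field_derivative_def by (rule has_derivative_eq_rhs) (auto simp: fun_eq_iff)
  have "((\<lambda>t. snd (snd (y t))) has_derivative (\<lambda>s. snd (snd (s *\<^sub>R v)))) F"
    by (rule has_derivative_snd[OF has_derivative_snd[OF h]])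
  then show "((\<lambda>t. snd (snd (y t))) has_real_derivative snd (snd v)) F"
    unfolding has_field_derivative_def by (rule has_derivative_eq_rhs) (auto simp: fun_eq_iff)
qed

lemma deriv_hill:
  fixes dmax h50 m h :: real
  assumes "h > 0" "h50 > 0"
  shows "((\<lambda>h. dmax * h powr m / (h50 powr m + h powr m)) has_real_derivative
     (dmax * (m * h powr (m-1)) * h50 powr m / (h50 powr m + h powr m)^2)) (at h)"
proof -
  have pos: "h50 powr m + h powr m > 0" using assms by (simp add: add_pos_pos)
  have "((\<lambda>h. dmax * h powr m / (h50 powr m + h powr m)) has_real_derivative
     ((dmax * (m * h powr (m-1)) * (h50 powr m + h powr m) - dmax * h powr m * (m * h powr (m-1))) / (h50 powr m + h powr m)^2)) (at h)"
    using assms pos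
    by (auto intro!: derivative_eq_intros simp: power2_eq_square)
  moreover have "((dmax * (m * h powr (m-1)) * (h50 powr m + h powr m) - dmax * h powr m * (m * h powr (m-1))) / (h50 powr m + h powr m)^2)
     = (dmax * (m * h powr (m-1)) * h50 powr m / (h50 powr m + h powr m)^2)"
    by (simp add: algebra_simps)
  ultimately show ?thesis by simp
qed

lemma deriv_logi:
  fixes s0 lam hc h :: real
  shows "((\<lambda>h. s0 / (1 + exp (- lam * (h - hc)))) has_real_derivative
     (s0 * lam * exp (- lam * (h - hc)) / (1 + exp (- lam * (h - hc)))^2)) (at h)"
proof -
  have pos: "1 + exp (- lam * (h - hc)) > 0" by (simp add: add_pos_pos)
  have "((\<lambda>h. s0 / (1 + exp (- lam * (h - hc)))) has_real_derivative
     (- (s0 * (exp (- lam * (h - hc)) * (- lam))) / (1 + exp (- lam * (h - hc)))^2)) (at h)"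
    using pos by (auto intro!: derivative_eq_intros simp: power2_eq_square)
  then show ?thesis by (simp add: ac_simps)
qed

lemma deriv_pow:
  fixes mu0 p h :: real
  assumes "h > 0"
  shows "((\<lambda>h. mu0 * h powr p) has_real_derivative (mu0 * (p * h powr (p - 1)))) (at h)"
  using assms by (auto intro!: derivative_eq_intros)

lemma deriv_G:
  fixes Kg h :: real
  assumes "Kg + h \<noteq> 0"
  shows "((\<lambda>h. Kg / (Kg + h)) has_real_derivative (- Kg / (Kg + h)^2)) (at h)"
  using assms by (auto intro!: derivative_eq_intros simp: power2_eq_square)

lemma deriv_Gam:
  fixes gamma0 eta n :: real
  assumes "1 + eta * n \<noteq> 0"
  shows "((\<lambda>n. gamma0 / (1 + eta * n)) has_real_derivative (- gamma0 * eta / (1 + eta * n)^2)) (at n)"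
  using assms by (auto intro!: derivative_eq_intros simp: power2_eq_square)

lemma int_pow:
  assumes "0 \<le> (t::real)"
  shows "((\<lambda>s::real. s^n) has_integral t^(Suc n)/Suc n) {0..t}"
proof -
  have d: "((\<lambda>s. s^Suc n / Suc n) has_vector_derivative x^n) (at x within {0..t})" if "x \<in> {0..t}" for x
  proof -
    have "((\<lambda>s. s^Suc n / Suc n) has_real_derivative x^n) (at x within {0..t})"
      by (rule derivative_eq_intros refl | simp)+
    then show "((\<lambda>s. s^Suc n / Suc n) has_vector_derivative x^n) (at x within {0..t})"
      by (simp add: has_real_derivative_iff_has_vector_derivative)
  qed
  show ?thesis using fundamental_theorem_of_calculus[OF assms d] by simp
qed

lemma picard:
  fixes G :: "'a::banach \<Rightarrow> 'a"
  assumes lip: "\<And>x y. norm (G x - G y) \<le> L * norm (x - y)" and L: "L \<ge> 0" and T: "T \<ge> 0"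
  shows "\<exists>y. y 0 = y0 \<and> (\<forall>t\<in>{0..T}. (y has_vector_derivative G (y t)) (at t within {0..T}))"
proof -
  define Y :: "nat \<Rightarrow> real \<Rightarrow> 'a" where "Y = rec_nat (\<lambda>t. y0) (\<lambda>k Yk t. y0 + integral {0..t} (\<lambda>s. G (Yk s)))"
  have Y0: "Y 0 = (\<lambda>t. y0)" by (simp add: Y_def)
  have YS: "\<And>k. Y (Suc k) = (\<lambda>t. y0 + integral {0..t} (\<lambda>s. G (Y k s)))" by (simp add: Y_def)
  have contG: "continuous_on UNIV G"
  proof -
    have "L-lipschitz_on UNIV G" using lip L by (auto simp: lipschitz_on_def dist_norm)
    then show ?thesis by (rule lipschitz_on_continuous_on)
  qed
  have cont: "continuous_on {0..T} (Y k)" for k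
  proof (induction k)
    case 0 then show ?case by (simp add: Y0)
  next
    case (Suc k)
    have "continuous_on {0..T} (\<lambda>s. G (Y k s))"
      using continuous_on_compose2[OF contG Suc] by auto
    then have "(\<lambda>s. G (Y k s)) integrable_on {0..T}" by (rule integrable_continuous_interval)
    then have "continuous_on {0..T} (\<lambda>t. integral {0..t} (\<lambda>s. G (Y k s)))"
      by (rule indefinite_integral_continuous_1)
    then show ?case unfolding YS by (intro continuous_intros)
  qed
  have contGY: "continuous_on {0..T} (\<lambda>s. G (Y k s))" for k
    using continuous_on_compose2[OF contG cont[of k]] by auto
  have intGY: "(\<lambda>s. G (Y k s)) integrable_on {0..t}" if "t \<le> T" for k t
    by (rule integrable_continuous_interval, rule continuous_on_subset[OF contGY]) (use that in auto)
  define B where "B = norm (G y0)"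
  have Bnn: "B \<ge> 0" by (simp add: B_def)
  have est: "\<forall>t\<in>{0..T}. norm (Y (Suc k) t - Y k t) \<le> B * L^k * t^(Suc k) / fact (Suc k)" for k
  proof (induction k)
    case 0
    show ?case by (auto simp: YS Y0 B_def)
  next
    case (Suc k)
    show ?case
    proof
      fix t assume t: "t \<in> {0..T}"
      have "Y (Suc (Suc k)) t - Y (Suc k) t = integral {0..t} (\<lambda>s. G (Y (Suc k) s)) - integral {0..t} (\<lambda>s. G (Y k s))"
        by (simp add: YS)
      also have "\<dots> = integral {0..t} (\<lambda>s. G (Y (Suc k) s) - G (Y k s))"
        using intGY t by (subst integral_diff) auto
      finally have eq: "Y (Suc (Suc k)) t - Y (Suc k) t = integral {0..t} (\<lambda>s. G (Y (Suc k) s) - G (Y k s))" .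
      define c where "c = L * (B * L^k / fact (Suc k))"
      have hi: "((\<lambda>s. c * s^Suc k) has_integral c * (t^(Suc (Suc k))/Suc (Suc k))) {0..t}"
        using int_pow[of t "Suc k"] t by (intro has_integral_mult_right) auto
      have "norm (integral {0..t} (\<lambda>s. G (Y (Suc k) s) - G (Y k s))) \<le> integral {0..t} (\<lambda>s. c * s^Suc k)"
      proof (rule integral_norm_bound_integral)
        show "(\<lambda>s. G (Y (Suc k) s) - G (Y k s)) integrable_on {0..t}"
          using intGY t by (intro integrable_diff) auto
        show "(\<lambda>s. c * s^Suc k) integrable_on {0..t}" using hi by blast
        fix s assume s: "s \<in> {0..t}"
        have "norm (G (Y (Suc k) s) - G (Y k s)) \<le> L * norm (Y (Suc k) s - Y k s)" by (rule lip)
        also have "\<dots> \<le> L * (B * L^k * s^(Suc k) / fact (Suc k))"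
          using Suc s t L by (intro mult_left_mono) auto
        finally show "norm (G (Y (Suc k) s) - G (Y k s)) \<le> c * s^Suc k" by (simp add: c_def)
      qed
      also have "\<dots> = c * (t^(Suc (Suc k))/Suc (Suc k))" using hi by (rule integral_unique)
      also have "\<dots> = B * L^Suc k * t^Suc (Suc k) / fact (Suc (Suc k))"
        by (simp add: c_def field_simps)
      finally show "norm (Y (Suc (Suc k)) t - Y (Suc k) t) \<le> B * L^Suc k * t^Suc (Suc k) / fact (Suc (Suc k))"
        using eq by simp
    qed
  qed
  define d where "d i t = Y (Suc i) t - Y i t" for i t
  have Ysum: "Y n t = y0 + (\<Sum>i<n. d i t)" for n t
    by (induction n) (auto simp: Y0 d_def)
  define M where "M i = B * L^i * T^(Suc i) / fact (Suc i)" for i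
  have dM: "norm (d i t) \<le> M i" if "t \<in> {0..T}" for i t
  proof -
    have "norm (d i t) \<le> B * L^i * t^(Suc i) / fact (Suc i)" using est that by (simp add: d_def)
    also have "\<dots> \<le> M i" unfolding M_def using that Bnn L
      by (intro divide_right_mono mult_left_mono power_mono) auto
    finally show ?thesis .
  qed
  have sumM: "summable M"
  proof (rule summable_comparison_test)
    show "summable (\<lambda>i. B * T * (inverse (fact i) * (L*T)^i))"
      by (intro summable_mult summable_exp)
    show "\<exists>N. \<forall>n\<ge>N. norm (M n) \<le> B * T * (inverse (fact n) * (L*T)^n)"
    proof (intro exI allI impI)
      fix n :: nat
      have f: "fact n \<le> (fact (Suc n) :: real)" by (rule fact_mono) auto
      have fp: "(0::real) < fact n" by simp
      have "M n = B * T * (L*T)^n / fact (Suc n)" by (simp add: M_def power_mult_distrib field_simps)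
      also have "\<dots> \<le> B * T * (L*T)^n / fact n"
        using Bnn T L f fp by (intro divide_left_mono) auto
      finally show "norm (M n) \<le> B * T * (inverse (fact n) * (L*T)^n)"
        using Bnn T L by (simp add: M_def field_simps)
    qed
  qed
  have WM: "uniform_limit {0..T} (\<lambda>n t. \<Sum>i<n. d i t) (\<lambda>t. \<Sum>i. d i t) sequentially"
    by (rule Weierstrass_m_test[OF dM sumM])
  define y where "y t = y0 + (\<Sum>i. d i t)" for t
  have ULY: "uniform_limit {0..T} Y y sequentially"
  proof -
    have "uniform_limit {0..T} (\<lambda>n t. y0 + (\<Sum>i<n. d i t)) (\<lambda>t. y0 + (\<Sum>i. d i t)) sequentially"
      by (intro uniform_limit_add uniform_limit_const WM)
    moreover have "Y = (\<lambda>n t. y0 + (\<Sum>i<n. d i t))" by (intro ext) (simp add: Ysum)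
    ultimately show ?thesis by (simp add: y_def[abs_def])
  qed
  have conty: "continuous_on {0..T} y"
    by (rule uniform_limit_theorem[OF _ ULY]) (auto simp: cont)
  have contGy: "continuous_on {0..T} (\<lambda>s. G (y s))"
    using continuous_on_compose2[OF contG conty] by auto
  have ULG: "uniform_limit {0..T} (\<lambda>n s. G (Y n s)) (\<lambda>s. G (y s)) sequentially"
  proof (rule uniform_limitI)
    fix e :: real assume e: "e > 0"
    have "\<forall>\<^sub>F n in sequentially. \<forall>s\<in>{0..T}. dist (Y n s) (y s) < e / (L + 1)"
      using ULY e L by (auto simp: uniform_limit_iff)
    then show "\<forall>\<^sub>F n in sequentially. \<forall>s\<in>{0..T}. dist (G (Y n s)) (G (y s)) < e"
    proof eventually_elim
      case (elim n)
      show ?case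
      proof
        fix s assume s: "s \<in> {0..T}"
        have "dist (G (Y n s)) (G (y s)) \<le> L * dist (Y n s) (y s)" using lip by (simp add: dist_norm)
        also have "\<dots> \<le> (L + 1) * dist (Y n s) (y s)" by (simp add: distrib_right)
        also have "\<dots> < (L + 1) * (e / (L + 1))" using elim s L by (intro mult_strict_left_mono) auto
        also have "\<dots> = e" using L by simp
        finally show "dist (G (Y n s)) (G (y s)) < e" .
      qed
    qed
  qed
  have yeq: "y t = y0 + integral {0..t} (\<lambda>s. G (y s))" if t: "t \<in> {0..T}" for t
  proof -
    have ul: "uniform_limit (cbox 0 t) (\<lambda>n s. G (Y n s)) (\<lambda>s. G (y s)) sequentially"
      by (rule uniform_limit_on_subset[OF ULG]) (use t in auto)
    have cc: "continuous_on (cbox 0 t) (\<lambda>s. G (Y n s))" for n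
      by (rule continuous_on_subset[OF contGY]) (use t in auto)
    obtain I J where IJ: "\<And>n. ((\<lambda>s. G (Y n s)) has_integral I n) (cbox 0 t)"
      "((\<lambda>s. G (y s)) has_integral J) (cbox 0 t)" "(I \<longlongrightarrow> J) sequentially"
      using uniform_limit_integral_cbox[OF ul cc] by auto
    have "(\<lambda>n. Y (Suc n) t) = (\<lambda>n. y0 + I n)"
      using IJ(1) by (auto simp: YS integral_unique)
    moreover have "(\<lambda>n. Y (Suc n) t) \<longlonglongrightarrow> y t"
      using tendsto_uniform_limitI[OF ULY t] by (rule LIMSEQ_Suc)
    moreover have "(\<lambda>n. y0 + I n) \<longlonglongrightarrow> y0 + J" by (intro tendsto_intros IJ(3))
    ultimately have "y t = y0 + J" using LIMSEQ_unique by metis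
    then show ?thesis using IJ(2) by (simp add: integral_unique)
  qed
  have "y 0 = y0" using yeq[of 0] T by simp
  moreover have "(y has_vector_derivative G (y t)) (at t within {0..T})" if t: "t \<in> {0..T}" for t
  proof -
    have i1: "((\<lambda>u. integral {0..u} (\<lambda>s. G (y s))) has_vector_derivative G (y t)) (at t within {0..T})"
      by (rule integral_has_vector_derivative[OF contGy t])
    have "((\<lambda>u. y0 + integral {0..u} (\<lambda>s. G (y s))) has_vector_derivative G (y t)) (at t within {0..T})"
      using has_vector_derivative_add[OF has_vector_derivative_const i1] by simp
    then show ?thesis
      by (rule has_vector_derivative_transform[OF t, rotated]) (simp add: yeq)
  qed
  ultimately show ?thesis by blast
qed

lemma quad_bound:
  fixes a' g d' b q u v w K1 L1 c0 :: real
  assumes a: "a' > 0" and g: "g > 0" and d: "d' > 0"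
    and K1: "K1 = 1 + b^2/(a'*g)" and L1: "L1 = 1 + 4*K1*q^2/(g*d')"
    and c0: "c0 = min (a'/2) (min (g/4) (d'/2))"
  shows "-a'*u^2 + b*u* v + K1*(-g* v^2 + q* v *w) + L1*(-d')*w^2 \<le> -c0*(u^2 + K1* v^2 + L1*w^2)"
proof -
  have K1p: "K1 \<ge> 1" using K1 a g by simp
  have L1p: "L1 \<ge> 1" using L1 K1p g d by simp
  have e1: "a'/2*u^2 + b^2/(2*a')* v^2 - b*u* v = (a'*u - b* v)^2/(2*a')"
    using a by (simp add: field_simps power2_eq_square)
  have i1: "b*u* v \<le> a'/2*u^2 + b^2/(2*a')* v^2"
    using e1 a by (smt (verit) divide_nonneg_pos zero_le_power2)
  have e2: "K1*g/2 = g/2 + b^2/(2*a')" using K1 a g by (simp add: field_simps)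
  have i1': "b*u* v \<le> a'/2*u^2 + K1*g/2* v^2"
  proof -
    have "b^2/(2*a') \<le> K1*g/2" using e2 g by simp
    then have "b^2/(2*a')* v^2 \<le> K1*g/2* v^2" by (rule mult_right_mono) simp
    then show ?thesis using i1 by linarith
  qed
  have e3: "g/4* v^2 + q^2/g*w^2 - q* v *w = (g/2* v - q*w)^2/g"
    using g by (simp add: field_simps power2_eq_square)
  have i2: "q* v *w \<le> g/4* v^2 + q^2/g*w^2"
    using e3 g by (smt (verit) divide_nonneg_pos zero_le_power2)
  have i2': "K1*(q* v *w) \<le> K1*g/4* v^2 + L1*d'/4*w^2"
  proof -
    have "K1*(q* v *w) \<le> K1*(g/4* v^2 + q^2/g*w^2)" using i2 K1p by (intro mult_left_mono) auto
    moreover have h: "L1*d'/4 = d'/4 + K1*q^2/g" using L1 g d by (simp add: field_simps)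
    moreover have "L1*d'/4*w^2 = d'/4*w^2 + K1*q^2/g*w^2" by (simp only: h distrib_right)
    moreover have "K1*(g/4* v^2 + q^2/g*w^2) = K1*g/4* v^2 + K1*q^2/g*w^2" by (simp add: algebra_simps)
    moreover have "0 \<le> d'/4*w^2" using d by simp
    ultimately show ?thesis by linarith
  qed
  have main: "-a'*u^2 + b*u* v + K1*(-g* v^2 + q* v *w) + L1*(-d')*w^2 \<le> -(a'/2)*u^2 - (g/4)*(K1* v^2) - (3*d'/4)*(L1*w^2)"
    using i1' i2' by (simp add: algebra_simps)
  have "c0 * u^2 \<le> (a'/2)*u^2" using c0 by (intro mult_right_mono) auto
  moreover have "c0 * (K1* v^2) \<le> (g/4)*(K1* v^2)" using c0 K1p by (intro mult_right_mono) auto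
  moreover have "c0 * (L1*w^2) \<le> (3*d'/4)*(L1*w^2)" using c0 L1p d by (intro mult_right_mono) auto
  ultimately show ?thesis using main by (simp add: algebra_simps)
qed

lemma rem_bound:
  fixes u v w R1 R2 R3 N e K1 L1 :: real
  assumes "\<bar>u\<bar> \<le> N" "\<bar>v\<bar> \<le> N" "\<bar>w\<bar> \<le> N" "\<bar>R1\<bar> \<le> e*N" "\<bar>R2\<bar> \<le> e*N" "\<bar>R3\<bar> \<le> e*N"
    "K1 \<ge> 0" "L1 \<ge> 0"
  shows "u*R1 + K1* v *R2 + L1*w*R3 \<le> (1 + K1 + L1) * e * N^2"
proof -
  have N: "N \<ge> 0" using assms(1) by linarith
  have pr: "x*R \<le> N*(e*N)" if "\<bar>x\<bar> \<le> N" "\<bar>R\<bar> \<le> e*N" for x R :: real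
  proof -
    have "x*R \<le> \<bar>x\<bar>*\<bar>R\<bar>" by (simp add: abs_mult[symmetric])
    also have "\<dots> \<le> N*(e*N)" using that N by (intro mult_mono) auto
    finally show ?thesis .
  qed
  have "u*R1 \<le> N*(e*N)" using assms by (intro pr) auto
  moreover have "v *R2 \<le> N*(e*N)" using assms by (intro pr) auto
  moreover have "w*R3 \<le> N*(e*N)" using assms by (intro pr) auto
  ultimately have "u*R1 + K1*(v *R2) + L1*(w*R3) \<le> N*(e*N) + K1*(N*(e*N)) + L1*(N*(e*N))"
    using assms by (intro add_mono mult_left_mono) auto
  then show ?thesis by (simp add: algebra_simps power2_eq_square)
qed

theorem theorem2:
  fixes s0 lam hc c phi dmax h50 m mu0 p nu alpha beta Kg gamma0 eta r xs :: real
    and S dS mu G Gam D :: "real \<Rightarrow> real"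
    and DD :: "real \<Rightarrow> real \<Rightarrow> real"
    and F :: "real \<times> real \<times> real \<Rightarrow> real \<times> real \<times> real"
  assumes pos: "s0 > 0" "lam > 0" "hc > 0" "c > 0" "phi > 0" "dmax > 0" "h50 > 0" "m > 0"
      "mu0 > 0" "p > 0" "nu > 0" "alpha > 0" "beta > 0" "Kg > 0" "gamma0 > 0" "eta > 0" "r > 0"
    and dS_def: "\<And>h. dS h = dmax * h powr m / (h50 powr m + h powr m)"
    and S_def: "\<And>h. S h = s0 / (1 + exp (- lam * (h - hc))) - c + phi * dS h"
    and mu_def: "\<And>h. mu h = mu0 * h powr p"
    and G_def: "\<And>h. G h = Kg / (Kg + h)"
    and Gamma_def: "\<And>n. Gam n = gamma0 / (1 + eta * n)"
    and D_def: "\<And>h x. DD h x = (1 - phi * x) * dS h"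
    and F_def: "\<And>x h n. F (x, h, n) =
        (x * (1 - x) * S h + mu h * (1 - x) - nu * x,
         alpha * n * (1 + beta * x) * G h - Gam n * (h - 1),
         r * n * (1 - n) - DD h x * n)"
    and xs_in: "0 < xs" "xs < 1"
    and xs_root: "xs * (1 - xs) * S 1 + mu0 * (1 - xs) - nu * xs = 0"
    and D_pos: "DD 1 xs > 0"
  shows "(r / DD 1 xs < 1 \<longrightarrow> locally_asymptotically_stable F (xs, 1, 0))
       \<and> (r / DD 1 xs > 1 \<longrightarrow> unstable F (xs, 1, 0))"
proof -
  define E0 :: "real \<times> real \<times> real" where "E0 = (xs, 1, 0)"
  have dSx: "dS = (\<lambda>h. dmax * h powr m / (h50 powr m + h powr m))" by (intro ext) (rule dS_def)
  have mux: "mu = (\<lambda>h. mu0 * h powr p)" by (intro ext) (rule mu_def)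
  have Gx: "G = (\<lambda>h. Kg / (Kg + h))" by (intro ext) (rule G_def)
  have Gamx: "Gam = (\<lambda>n. gamma0 / (1 + eta * n))" by (intro ext) (rule Gamma_def)
  define dS' where "dS' h = dmax * (m * h powr (m-1)) * h50 powr m / (h50 powr m + h powr m)^2" for h
  define S' where "S' h = s0 * lam * exp (- lam * (h - hc)) / (1 + exp (- lam * (h - hc)))^2 + phi * dS' h" for h
  define mu' where "mu' h = mu0 * (p * h powr (p - 1))" for h
  define G' where "G' h = - Kg / (Kg + h)^2" for h
  define Gam' where "Gam' n = - gamma0 * eta / (1 + eta * n)^2" for n
  have dSd: "(dS has_real_derivative dS' h) (at h)" if "h > 0" for h
    unfolding dSx dS'_def using deriv_hill[OF that pos(7)] .
  have Sd: "(S has_real_derivative S' h) (at h)" if "h > 0" for h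
  proof -
    have "((\<lambda>h. s0 / (1 + exp (- lam * (h - hc))) - c + phi * dS h) has_real_derivative
      (s0 * lam * exp (- lam * (h - hc)) / (1 + exp (- lam * (h - hc)))^2 - 0 + phi * dS' h)) (at h)"
      by (intro DERIV_add DERIV_diff DERIV_const DERIV_cmult deriv_logi dSd that)
    moreover have "(\<lambda>h. s0 / (1 + exp (- lam * (h - hc))) - c + phi * dS h) = S" by (intro ext) (simp add: S_def)
    ultimately show ?thesis by (simp add: S'_def)
  qed
  have mud: "(mu has_real_derivative mu' h) (at h)" if "h > 0" for h
    unfolding mux mu'_def using deriv_pow[OF that] .
  have Gd: "(G has_real_derivative G' h) (at h)" if "Kg + h \<noteq> 0" for h
    unfolding Gx G'_def using deriv_G[OF that] .
  have Gamd: "(Gam has_real_derivative Gam' n) (at n)" if "1 + eta * n \<noteq> 0" for n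
    unfolding Gamx Gam'_def using deriv_Gam[OF that] .
  define U where "U = {z::real\<times>real\<times>real. fst (snd z) > 0 \<and> 1 + eta * snd (snd z) > 0}"
  define f1 where "f1 z = fst z * (1 - fst z) * S (fst (snd z)) + mu (fst (snd z)) * (1 - fst z) - nu * fst z" for z :: "real\<times>real\<times>real"
  define f2 where "f2 z = alpha * snd (snd z) * (1 + beta * fst z) * G (fst (snd z)) - Gam (snd (snd z)) * (fst (snd z) - 1)" for z :: "real\<times>real\<times>real"
  define f3 where "f3 z = r * snd (snd z) * (1 - snd (snd z)) - (1 - phi * fst z) * dS (fst (snd z)) * snd (snd z)" for z :: "real\<times>real\<times>real"
  have Fz: "F z = (f1 z, f2 z, f3 z)" for z
    by (cases z) (simp add: F_def f1_def f2_def f3_def D_def)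
  define A11 where "A11 z = (1 - 2 * fst z) * S (fst (snd z)) - mu (fst (snd z)) - nu" for z :: "real\<times>real\<times>real"
  define A12 where "A12 z = fst z * (1 - fst z) * S' (fst (snd z)) + mu' (fst (snd z)) * (1 - fst z)" for z :: "real\<times>real\<times>real"
  define A21 where "A21 z = alpha * snd (snd z) * beta * G (fst (snd z))" for z :: "real\<times>real\<times>real"
  define A22 where "A22 z = alpha * snd (snd z) * (1 + beta * fst z) * G' (fst (snd z)) - Gam (snd (snd z))" for z :: "real\<times>real\<times>real"
  define A23 where "A23 z = alpha * (1 + beta * fst z) * G (fst (snd z)) - Gam' (snd (snd z)) * (fst (snd z) - 1)" for z :: "real\<times>real\<times>real"
  define A31 where "A31 z = phi * dS (fst (snd z)) * snd (snd z)" for z :: "real\<times>real\<times>real"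
  define A32 where "A32 z = - (1 - phi * fst z) * dS' (fst (snd z)) * snd (snd z)" for z :: "real\<times>real\<times>real"
  define A33 where "A33 z = r * (1 - 2 * snd (snd z)) - (1 - phi * fst z) * dS (fst (snd z))" for z :: "real\<times>real\<times>real"
  have hx: "((\<lambda>z::real\<times>real\<times>real. fst z) has_derivative (\<lambda>d. fst d)) (at z)" for z
    by (auto intro!: derivative_eq_intros)
  have hh: "((\<lambda>z::real\<times>real\<times>real. fst (snd z)) has_derivative (\<lambda>d. fst (snd d))) (at z)" for z
    by (auto intro!: derivative_eq_intros)
  have hn: "((\<lambda>z::real\<times>real\<times>real. snd (snd z)) has_derivative (\<lambda>d. snd (snd d))) (at z)" for z
    by (auto intro!: derivative_eq_intros)
  have d1: "(f1 has_derivative (\<lambda>d. A11 z * fst d + A12 z * fst (snd d) + 0 * snd (snd d))) (at z)" if "z \<in> U" for z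
  proof -
    have hS: "((\<lambda>z. S (fst (snd z))) has_derivative (\<lambda>d. fst (snd d) * S' (fst (snd z)))) (at z)"
      by (rule DERIV_compose_FDERIV[OF Sd hh]) (use that in \<open>auto simp: U_def\<close>)
    have hmu: "((\<lambda>z. mu (fst (snd z))) has_derivative (\<lambda>d. fst (snd d) * mu' (fst (snd z)))) (at z)"
      by (rule DERIV_compose_FDERIV[OF mud hh]) (use that in \<open>auto simp: U_def\<close>)
    show ?thesis unfolding f1_def[abs_def]
      apply (rule has_derivative_eq_rhs)
       apply (rule has_derivative_diff has_derivative_add has_derivative_mult hx hh hn hS hmu has_derivative_const)+
      apply (rule ext)
      apply (simp add: A11_def A12_def algebra_simps)
      done
  qed
  have d2: "(f2 has_derivative (\<lambda>d. A21 z * fst d + A22 z * fst (snd d) + A23 z * snd (snd d))) (at z)" if "z \<in> U" for z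
  proof -
    have hG: "((\<lambda>z. G (fst (snd z))) has_derivative (\<lambda>d. fst (snd d) * G' (fst (snd z)))) (at z)"
      by (rule DERIV_compose_FDERIV[OF Gd hh]) (use that pos in \<open>auto simp: U_def\<close>)
    have hGam: "((\<lambda>z. Gam (snd (snd z))) has_derivative (\<lambda>d. snd (snd d) * Gam' (snd (snd z)))) (at z)"
      by (rule DERIV_compose_FDERIV[OF Gamd hn]) (use that in \<open>auto simp: U_def\<close>)
    show ?thesis unfolding f2_def[abs_def]
      apply (rule has_derivative_eq_rhs)
       apply (rule has_derivative_diff has_derivative_add has_derivative_mult hx hh hn hG hGam has_derivative_const)+
      apply (rule ext)
      apply (simp add: A21_def A22_def A23_def algebra_simps)
      done
  qed
  have d3: "(f3 has_derivative (\<lambda>d. A31 z * fst d + A32 z * fst (snd d) + A33 z * snd (snd d))) (at z)" if "z \<in> U" for z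
  proof -
    have hdS: "((\<lambda>z. dS (fst (snd z))) has_derivative (\<lambda>d. fst (snd d) * dS' (fst (snd z)))) (at z)"
      by (rule DERIV_compose_FDERIV[OF dSd hh]) (use that in \<open>auto simp: U_def\<close>)
    show ?thesis unfolding f3_def[abs_def]
      apply (rule has_derivative_eq_rhs)
       apply (rule has_derivative_diff has_derivative_add has_derivative_mult hx hh hn hdS has_derivative_const)+
      apply (rule ext)
      apply (simp add: A31_def A32_def A33_def algebra_simps)
      done
  qed
  define rho0 where "rho0 = min (1/2) (1 / (2 * eta))"
  have rho0: "rho0 > 0" "rho0 \<le> 1/2" "rho0 \<le> 1 / (2 * eta)" using pos by (auto simp: rho0_def)
  define K where "K = cball E0 rho0"
  have KU: "z \<in> U" if "z \<in> K" for z
  proof -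
    obtain x h n where z: "z = (x, h, n)" by (cases z) auto
    have nz: "norm ((x, h, n) - E0) \<le> rho0" using that unfolding K_def z mem_cball dist_norm
      by (simp only: norm_minus_commute)
    have e: "(x, h, n) - E0 = (x - xs, h - 1, n)" by (simp add: E0_def)
    have a: "\<bar>h - 1\<bar> \<le> rho0" using comp_le(2)[of "(x - xs, h - 1, n)"] nz unfolding e by simp
    have b: "\<bar>n\<bar> \<le> rho0" using comp_le(3)[of "(x - xs, h - 1, n)"] nz unfolding e by simp
    have "eta * \<bar>n\<bar> \<le> eta * (1 / (2 * eta))" using b rho0 pos(16) by (intro mult_left_mono) auto
    then have "eta * \<bar>n\<bar> \<le> 1/2" using pos(16) by simp
    moreover have "- (eta * \<bar>n\<bar>) \<le> eta * n" using pos(16) abs_ge_minus_self[of "eta*n"] by (simp add: abs_mult)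
    ultimately show ?thesis using a rho0 unfolding z U_def by auto
  qed
  have cK: "compact K" "convex K" by (auto simp: K_def)
  have ch: "continuous_on K (\<lambda>z. g (fst (snd z)))" if "continuous_on {0<..} g" for g
  proof (rule continuous_on_compose2[OF that])
    show "continuous_on K (\<lambda>z. fst (snd z))" by (intro continuous_intros)
    show "(\<lambda>z. fst (snd z)) ` K \<subseteq> {0<..}" using KU unfolding U_def by auto
  qed
  have cn: "continuous_on K (\<lambda>z. g (snd (snd z)))" if "continuous_on {-1/eta<..} g" for g
  proof (rule continuous_on_compose2[OF that])
    show "continuous_on K (\<lambda>z. snd (snd z))" by (intro continuous_intros)
    show "(\<lambda>z. snd (snd z)) ` K \<subseteq> {- 1 / eta<..}"
    proof
      fix n assume "n \<in> (\<lambda>z. snd (snd z)) ` K"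
      then have "1 + eta * n > 0" using KU unfolding U_def by auto
      then show "n \<in> {- 1 / eta<..}" using pos(16) by (simp add: field_simps)
    qed
  qed
  have pden: "h50 powr m + h powr m > 0" for h using pos(7) by (simp add: add_pos_nonneg)
  have pden': "h50 powr m + h powr m \<noteq> 0" for h using pden[of h] by linarith
  have pexp: "1 + exp (- lam * (h - hc)) \<noteq> 0" for h using add_pos_pos[OF zero_less_one exp_gt_zero, of "- lam * (h - hc)"] by linarith
  have pexp2: "1 + exp (- (lam * (h - hc))) \<noteq> 0" for h using pexp[of h] by simp
  have cdS: "continuous_on {0<..} dS" unfolding dSx
    by (intro continuous_intros) (auto simp: pden')
  have cdS': "continuous_on {0<..} dS'" unfolding dS'_def[abs_def]
    by (intro continuous_intros) (auto simp: pden')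
  have cS: "continuous_on {0<..} S"
    by (rule continuous_at_imp_continuous_on) (use Sd DERIV_isCont in auto)
  have cS': "continuous_on {0<..} S'" unfolding S'_def[abs_def]
    by (intro continuous_intros cdS') (auto simp: pexp pexp2)
  have cmu: "continuous_on {0<..} mu" unfolding mux by (intro continuous_intros) auto
  have cmu': "continuous_on {0<..} mu'" unfolding mu'_def[abs_def] by (intro continuous_intros) auto
  have cG: "continuous_on {0<..} G" unfolding Gx using pos(14) by (intro continuous_intros) auto
  have cG': "continuous_on {0<..} G'" unfolding G'_def[abs_def] using pos(14) by (intro continuous_intros) auto
  have cGam: "continuous_on {-1/eta<..} Gam" unfolding Gamx
  proof (intro continuous_intros)
    show "\<forall>x\<in>{- 1 / eta<..}. 1 + eta * x \<noteq> 0" using pos(16) by (auto simp: field_simps)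
  qed
  have cGam': "continuous_on {-1/eta<..} Gam'" unfolding Gam'_def[abs_def]
  proof (intro continuous_intros)
    show "\<forall>x\<in>{- 1 / eta<..}. (1 + eta * x)^2 \<noteq> 0" using pos(16) by (auto simp: field_simps)
  qed
  note cK1 = ch[OF cS] ch[OF cS'] ch[OF cmu] ch[OF cmu'] ch[OF cG] ch[OF cG'] ch[OF cdS] ch[OF cdS'] cn[OF cGam] cn[OF cGam']
  have cA: "continuous_on K A11" "continuous_on K A12" "continuous_on K A21" "continuous_on K A22"
    "continuous_on K A23" "continuous_on K A31" "continuous_on K A32" "continuous_on K A33"
    unfolding A11_def[abs_def] A12_def[abs_def] A21_def[abs_def] A22_def[abs_def] A23_def[abs_def]
      A31_def[abs_def] A32_def[abs_def] A33_def[abs_def]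
    by (intro continuous_intros cK1)+
  obtain C1 where C1: "\<forall>a\<in>K. \<forall>b\<in>K. \<bar>f1 a - f1 b\<bar> \<le> C1 * norm (a - b)"
    using lip3[OF cK d1[OF KU] cA(1) cA(2) continuous_on_const] by blast
  obtain C2 where C2: "\<forall>a\<in>K. \<forall>b\<in>K. \<bar>f2 a - f2 b\<bar> \<le> C2 * norm (a - b)"
    using lip3[OF cK d2[OF KU] cA(3) cA(4) cA(5)] by blast
  obtain C3 where C3: "\<forall>a\<in>K. \<forall>b\<in>K. \<bar>f3 a - f3 b\<bar> \<le> C3 * norm (a - b)"
    using lip3[OF cK d3[OF KU] cA(6) cA(7) cA(8)] by blast
  define LF where "LF = max 0 (C1 + C2 + C3)"
  have LF: "LF \<ge> 0" by (simp add: LF_def)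
  have FLip: "norm (F a - F b) \<le> LF * norm (a - b)" if "a \<in> K" "b \<in> K" for a b
  proof -
    have "norm (F a - F b) \<le> \<bar>f1 a - f1 b\<bar> + \<bar>f2 a - f2 b\<bar> + \<bar>f3 a - f3 b\<bar>"
      using norm3_le[of "F a - F b"] by (simp add: Fz)
    also have "\<dots> \<le> C1 * norm (a - b) + C2 * norm (a - b) + C3 * norm (a - b)"
      using C1 C2 C3 that by (intro add_mono) auto
    also have "\<dots> = (C1 + C2 + C3) * norm (a - b)" by (simp add: distrib_right)
    also have "\<dots> \<le> LF * norm (a - b)" by (intro mult_right_mono) (auto simp: LF_def)
    finally show ?thesis .
  qed
  have E0U: "E0 \<in> U" by (simp add: U_def E0_def)
  have mu1: "mu 1 = mu0" by (simp add: mu_def)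
  have Gam0: "Gam 0 = gamma0" by (simp add: Gamma_def)
  have FE0: "F E0 = 0" using xs_root by (simp add: E0_def F_def mu1 zero_prod_def)
  define a where "a = A11 E0"
  define b where "b = A12 E0"
  define q where "q = A23 E0"
  have aval: "a = (1 - 2 * xs) * S 1 - mu0 - nu" by (simp add: a_def A11_def E0_def mu1)
  have A0: "A21 E0 = 0" "A22 E0 = - gamma0" "A31 E0 = 0" "A32 E0 = 0" "A33 E0 = r - DD 1 xs"
    by (simp_all add: A21_def A22_def A31_def A32_def A33_def E0_def Gam0 D_def)
  have Ffun: "F = (\<lambda>z. (f1 z, f2 z, f3 z))" by (intro ext) (rule Fz)
  have dF: "(F has_derivative (\<lambda>d. (a * fst d + b * fst (snd d), - gamma0 * fst (snd d) + q * snd (snd d),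
      (r - DD 1 xs) * snd (snd d)))) (at E0)"
    unfolding Ffun
    apply (rule has_derivative_eq_rhs)
     apply (rule has_derivative_Pair[OF d1[OF E0U] has_derivative_Pair[OF d2[OF E0U] d3[OF E0U]]])
    apply (simp add: A0 a_def b_def q_def)
    done
  have aneg: "a < 0"
  proof -
    have e1: "a * xs = - (xs * xs * S 1) - mu0" using xs_root unfolding aval by algebra
    have e2: "a * (1 - xs) = (1 - xs) * (1 - xs) * S 1 - nu" using xs_root unfolding aval by algebra
    show ?thesis
    proof (cases "S 1 \<ge> 0")
      case True
      have "xs * xs * S 1 \<ge> 0" using True xs_in by simp
      then have "a * xs < 0" using e1 pos(9) by linarith
      then show ?thesis using xs_in by (simp add: mult_less_0_iff)
    next
      case False
      have "(1 - xs) * (1 - xs) * S 1 \<le> 0" using False xs_in by (simp add: mult_nonneg_nonpos)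
      then have "a * (1 - xs) < 0" using e2 pos(11) by linarith
      then show ?thesis using xs_in by (simp add: mult_less_0_iff)
    qed
  qed
  have stab: "locally_asymptotically_stable F E0" if rD: "r < DD 1 xs"
  proof -
    define a' where "a' = - a"
    define g where "g = gamma0"
    define d' where "d' = DD 1 xs - r"
    have a'p: "a' > 0" "g > 0" "d' > 0" using aneg pos(15) rD by (auto simp: a'_def g_def d'_def)
    define K1 where "K1 = 1 + b^2/(a'*g)"
    define L1 where "L1 = 1 + 4*K1*q^2/(g*d')"
    define c0 where "c0 = min (a'/2) (min (g/4) (d'/2))"
    have K1p: "K1 \<ge> 1" using a'p by (simp add: K1_def)
    have L1p: "L1 \<ge> 1" using a'p K1p by (simp add: L1_def)
    have c0p: "c0 > 0" using a'p by (simp add: c0_def)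
    define e0 where "e0 = c0 / (2 * (1 + K1 + L1))"
    have e0p: "e0 > 0" using c0p K1p L1p by (simp add: e0_def)
    obtain del1 where del1: "del1 > 0" and
      del1R: "\<And>z. norm (z - E0) < del1 \<Longrightarrow> norm (F z - F E0 - (a * fst (z - E0) + b * fst (snd (z - E0)),
          - gamma0 * fst (snd (z - E0)) + q * snd (snd (z - E0)), (r - DD 1 xs) * snd (snd (z - E0)))) \<le> e0 * norm (z - E0)"
      using dF[unfolded has_derivative_at_alt] e0p by blast
    define W where "W z = (fst z - xs)^2 + K1 * (fst (snd z) - 1)^2 + L1 * (snd (snd z))^2" for z :: "real\<times>real\<times>real"
    define Phi where "Phi z = 2 * (fst z - xs) * fst (F z) + 2 * K1 * (fst (snd z) - 1) * fst (snd (F z))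
       + 2 * L1 * snd (snd z) * snd (snd (F z))" for z :: "real\<times>real\<times>real"
    define M where "M = 1 + K1 + L1"
    have Mp: "M \<ge> 1" using K1p L1p by (simp add: M_def)
    have Wlow: "(norm (z - E0))^2 \<le> W z" for z
    proof -
      obtain x h n where z: "z = (x, h, n)" by (cases z) auto
      have "(norm (z - E0))^2 = (x - xs)^2 + (h - 1)^2 + n^2" using norm3_sq[of "z - E0"] by (simp add: z E0_def)
      moreover have "(h - 1)^2 \<le> K1 * (h - 1)^2" using K1p by (simp add: mult_le_cancel_right1)
      moreover have "n^2 \<le> L1 * n^2" using L1p by (simp add: mult_le_cancel_right1)
      ultimately show ?thesis by (simp add: W_def z)
    qed
    have Wup: "W z \<le> M * (norm (z - E0))^2" for z
    proof -
      obtain x h n where z: "z = (x, h, n)" by (cases z) auto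
      have "(norm (z - E0))^2 = (x - xs)^2 + (h - 1)^2 + n^2" using norm3_sq[of "z - E0"] by (simp add: z E0_def)
      moreover have "(x - xs)^2 \<le> M * (x - xs)^2" using Mp by (simp add: mult_le_cancel_right1)
      moreover have "K1 * (h - 1)^2 \<le> M * (h - 1)^2" using L1p by (intro mult_right_mono) (auto simp: M_def)
      moreover have "L1 * n^2 \<le> M * n^2" using K1p by (intro mult_right_mono) (auto simp: M_def)
      ultimately show ?thesis by (simp add: W_def z algebra_simps)
    qed
    have key: "Phi z \<le> - c0 * W z" if zN: "norm (z - E0) < del1" for z
    proof -
      obtain x h n where z: "z = (x, h, n)" by (cases z) auto
      define N where "N = norm (z - E0)"
      define u where "u = x - xs"
      define v where "v = h - 1"
      define w where "w = n"
      have zE: "z - E0 = (u, v, w)" by (simp add: z E0_def u_def v_def w_def)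
      define R where "R = F z - (a * u + b * v, - gamma0 * v + q * w, (r - DD 1 xs) * w)"
      have RN: "norm R \<le> e0 * N" using del1R[OF zN] by (simp add: R_def N_def zE FE0)
      have R1: "\<bar>fst R\<bar> \<le> e0 * N" using comp_le(1)[of R] RN by linarith
      have R2: "\<bar>fst (snd R)\<bar> \<le> e0 * N" using comp_le(2)[of R] RN by linarith
      have R3: "\<bar>snd (snd R)\<bar> \<le> e0 * N" using comp_le(3)[of R] RN by linarith
      have uN: "\<bar>u\<bar> \<le> N" using comp_le(1)[of "z - E0"] by (simp add: N_def zE)
      have vN: "\<bar>v\<bar> \<le> N" using comp_le(2)[of "z - E0"] by (simp add: N_def zE)
      have wN: "\<bar>w\<bar> \<le> N" using comp_le(3)[of "z - E0"] by (simp add: N_def zE)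
      have Fc: "fst (F z) = a * u + b * v + fst R" "fst (snd (F z)) = - gamma0 * v + q * w + fst (snd R)"
        "snd (snd (F z)) = (r - DD 1 xs) * w + snd (snd R)" by (simp_all add: R_def)
      have Phie: "Phi z = 2 * (-a'*u^2 + b*u * v + K1*(-g * v^2 + q * v * w) + L1*(-d')*w^2)
          + 2 * (u * fst R + K1 * v * fst (snd R) + L1 * w * snd (snd R))"
        unfolding Phi_def Fc by (simp add: z u_def v_def w_def a'_def g_def d'_def algebra_simps power2_eq_square)
      have We: "W z = u^2 + K1 * v^2 + L1*w^2" by (simp add: W_def z u_def v_def w_def)
      have q1: "-a'*u^2 + b*u * v + K1*(-g * v^2 + q * v * w) + L1*(-d')*w^2 \<le> -c0*(u^2 + K1 * v^2 + L1*w^2)"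
        by (rule quad_bound[OF a'p K1_def L1_def c0_def])
      have q2: "u * fst R + K1 * v * fst (snd R) + L1 * w * snd (snd R) \<le> (1 + K1 + L1) * e0 * N^2"
        by (rule rem_bound[OF uN vN wN R1 R2 R3]) (use K1p L1p in auto)
      have "1 + K1 + L1 > 0" using K1p L1p by simp
      then have "(1 + K1 + L1) * e0 = c0 / 2" unfolding e0_def by (simp add: field_simps)
      moreover have "N^2 \<le> W z" unfolding N_def by (rule Wlow)
      ultimately have q3: "(1 + K1 + L1) * e0 * N^2 \<le> c0 / 2 * W z" using c0p by (metis less_imp_le half_gt_zero mult_left_mono)
      show ?thesis using Phie We q1 q2 q3 by (simp add: algebra_simps)
    qed
    have decay: "\<forall>t\<in>{0..T}. W (y t) \<le> W (y 0) * exp (- c0 * t)"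
      if T: "T \<ge> 0" and sol: "is_solution F {0..T} y" and y0: "W (y 0) < del1^2" for T y
    proof -
      have dy: "(y has_vector_derivative F (y t)) (at t within {0..T})" if "t \<in> {0..T}" for t
        using sol that by (simp add: is_solution_def)
      have cy: "continuous_on {0..T} y"
        unfolding continuous_on_eq_continuous_within using dy has_vector_derivative_continuous by blast
      have cW: "continuous_on {0..T} (\<lambda>t. W (y t))" unfolding W_def by (intro continuous_intros cy)
      have mono: "W (y s) \<le> W (y 0) * exp (- c0 * s)"
        if s: "0 < s" "s \<le> T" and lt: "\<forall>t\<in>{0..<s}. W (y t) < del1^2" for s
      proof -
        define gf where "gf t = W (y t) * exp (c0 * t)" for t
        have "gf s \<le> gf 0"
        proof (rule DERIV_nonpos_imp_decreasing_open[of 0 s gf])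
          show "0 \<le> s" using s by simp
          fix t assume t: "0 < t" "t < s"
          have ii: "at t within {0..T} = at t" using t s by (intro at_within_interior) simp
          have tT: "t \<in> {0..T}" using t s by simp
          have dyt: "(y has_vector_derivative F (y t)) (at t)"
            using dy[OF tT] unfolding ii .
          note cs = vd_comps[OF dyt]
          have "(gf has_real_derivative (Phi (y t) + c0 * W (y t)) * exp (c0 * t)) (at t)"
            unfolding gf_def W_def
            apply (rule derivative_eq_intros cs refl | simp)+
            apply (simp add: Phi_def W_def algebra_simps)
            done
          moreover have "(Phi (y t) + c0 * W (y t)) * exp (c0 * t) \<le> 0"
          proof -
            have "W (y t) < del1^2" using lt t by simp
            then have "(norm (y t - E0))^2 < del1^2" using Wlow[of "y t"] by linarith
            then have "norm (y t - E0) < del1" using del1 by (simp add: power_less_imp_less_base)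
            then have "Phi (y t) \<le> - c0 * W (y t)" by (rule key)
            then have "Phi (y t) + c0 * W (y t) \<le> 0" by linarith
            then show ?thesis by (simp add: mult_nonpos_nonneg)
          qed
          ultimately show "\<exists>D. (gf has_real_derivative D) (at t) \<and> D \<le> 0" by blast
        next
          show "continuous_on {0..s} gf" unfolding gf_def
            by (intro continuous_intros continuous_on_subset[OF cW]) (use s in auto)
        qed
        then have "W (y s) * exp (c0 * s) \<le> W (y 0)" by (simp add: gf_def)
        then have "W (y s) * exp (c0 * s) * exp (- c0 * s) \<le> W (y 0) * exp (- c0 * s)"
          by (rule mult_right_mono) simp
        then show ?thesis by (simp add: mult.assoc exp_add[symmetric])
      qed
      have all: "\<forall>t\<in>{0..T}. W (y t) < del1^2"
      proof (rule first_exit[OF cW y0 T])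
        fix s assume s: "0 < s" "s \<le> T" and lt: "\<forall>t\<in>{0..<s}. W (y t) < del1^2"
        have "W (y 0) * exp (- c0 * s) \<le> W (y 0) * 1"
          using Wlow[of "y 0"] c0p s by (intro mult_left_mono) (auto intro: order_trans[OF zero_le_power2])
        then show "W (y s) < del1^2" using mono[OF s lt] y0 by linarith
      qed
      show ?thesis
      proof
        fix t assume t: "t \<in> {0..T}"
        show "W (y t) \<le> W (y 0) * exp (- c0 * t)"
        proof (cases "t = 0")
          case True then show ?thesis by simp
        next
          case False
          then show ?thesis using t all by (intro mono) auto
        qed
      qed
    qed
    have Wnn: "W z \<ge> 0" for z using Wlow[of z] by (meson order_trans zero_le_power2)
    have sM: "sqrt M > 0" using Mp by simp
    have sM2: "(sqrt M)^2 = M" using Mp by simp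
    have W0b: "W (y 0) < mm^2" if "dist (y 0) E0 < mm / sqrt M" "mm > 0" for y :: "real \<Rightarrow> real\<times>real\<times>real" and mm
    proof -
      have "norm (y 0 - E0) < mm / sqrt M" using that by (simp add: dist_norm)
      then have "(norm (y 0 - E0))^2 < (mm / sqrt M)^2" by (intro power_strict_mono) auto
      also have "\<dots> = mm^2 / M" by (simp add: power_divide sM2)
      finally have "M * (norm (y 0 - E0))^2 < mm^2" using Mp by (simp add: field_simps)
      then show ?thesis using Wup[of "y 0"] by linarith
    qed
    have lyap: "lyapunov_stable F E0"
      unfolding lyapunov_stable_def
    proof (intro allI impI)
      fix ep :: real assume ep: "ep > 0"
      define mm where "mm = min ep del1"
      have mmp: "mm > 0" using ep del1 by (simp add: mm_def)
      show "\<exists>\<delta>>0. \<forall>T y. 0 \<le> T \<and> is_solution F {0..T} y \<and> dist (y 0) E0 < \<delta> \<longrightarrow> (\<forall>t\<in>{0..T}. dist (y t) E0 < ep)"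
      proof (intro exI conjI allI impI)
        show "mm / sqrt M > 0" using mmp sM by simp
        fix T and y :: "real \<Rightarrow> real\<times>real\<times>real"
        assume H: "0 \<le> T \<and> is_solution F {0..T} y \<and> dist (y 0) E0 < mm / sqrt M"
        have W0: "W (y 0) < mm^2" using W0b[of y mm] H mmp by blast
        have "mm^2 \<le> del1^2" using mmp by (intro power_mono) (auto simp: mm_def)
        then have W0': "W (y 0) < del1^2" using W0 by linarith
        have dec: "\<forall>t\<in>{0..T}. W (y t) \<le> W (y 0) * exp (- c0 * t)" using decay[of T y] H W0' by blast
        have "mm^2 \<le> ep^2" using mmp by (intro power_mono) (auto simp: mm_def)
        show "\<forall>t\<in>{0..T}. dist (y t) E0 < ep"
        proof
          fix t assume t: "t \<in> {0..T}"
          have "exp (- c0 * t) \<le> 1" using c0p t by simp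
          then have "W (y 0) * exp (- c0 * t) \<le> W (y 0)" using Wnn[of "y 0"] by (simp add: mult_left_le)
          then have "(norm (y t - E0))^2 < ep^2"
            using dec t Wlow[of "y t"] W0 \<open>mm^2 \<le> ep^2\<close> by fastforce
          then have "norm (y t - E0) < ep" using ep by (simp add: power_less_imp_less_base)
          then show "dist (y t) E0 < ep" by (simp add: dist_norm)
        qed
      qed
    qed
    have expl: "((\<lambda>t. exp (- c0 * t)) \<longlongrightarrow> 0) at_top"
    proof -
      have "filterlim (\<lambda>t::real. - c0 * t) at_bot at_top"
        by (rule filterlim_tendsto_neg_mult_at_bot[OF tendsto_const]) (use c0p in \<open>auto intro: filterlim_ident\<close>)
      then show ?thesis by (rule filterlim_compose[OF exp_at_bot])
    qed
    have attr: "locally_attractive F E0"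
      unfolding locally_attractive_def
    proof (intro exI conjI allI impI)
      show "del1 / sqrt M > 0" using del1 sM by simp
      fix y :: "real \<Rightarrow> real\<times>real\<times>real"
      assume H: "is_solution F {0..} y \<and> dist (y 0) E0 < del1 / sqrt M"
      have W0: "W (y 0) < del1^2" using W0b[of y del1] H del1 by blast
      have bound: "norm (y t - E0) \<le> sqrt (W (y 0) * exp (- c0 * t))" if t: "t \<ge> 0" for t
      proof -
        have sol: "is_solution F {0..t} y" unfolding is_solution_def
        proof
          fix s assume s: "s \<in> {0..t}"
          have "(y has_vector_derivative F (y s)) (at s within {0..})" using H s by (auto simp: is_solution_def)
          then show "(y has_vector_derivative F (y s)) (at s within {0..t})"
            by (rule has_vector_derivative_within_subset) auto
        qed
        have "W (y t) \<le> W (y 0) * exp (- c0 * t)" using decay[OF t sol W0] t by auto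
        then have "(norm (y t - E0))^2 \<le> W (y 0) * exp (- c0 * t)" using Wlow[of "y t"] by linarith
        then show ?thesis by (rule real_le_rsqrt)
      qed
      have lim0: "((\<lambda>t. sqrt (W (y 0) * exp (- c0 * t))) \<longlongrightarrow> 0) at_top"
        using tendsto_real_sqrt[OF tendsto_mult_right_zero[OF expl, of "W (y 0)"]] by simp
      have "((\<lambda>t. y t - E0) \<longlongrightarrow> 0) at_top"
      proof (rule Lim_null_comparison[OF _ lim0])
        show "\<forall>\<^sub>F t in at_top. norm (y t - E0) \<le> sqrt (W (y 0) * exp (- c0 * t))"
          using bound by (auto simp: eventually_at_top_linorder intro: exI[of _ 0])
      qed
      then show "(y \<longlongrightarrow> E0) at_top" by (simp add: Lim_null[symmetric])
    qed
    show ?thesis using lyap attr by (simp add: locally_asymptotically_stable_def)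
  qed
  have instab: "unstable F E0" if rD: "r > DD 1 xs"
  proof -
    define kap where "kap = (r - DD 1 xs) / 2"
    have kap: "kap > 0" using rD by (simp add: kap_def)
    define phf where "phf z = r * (1 - snd (snd z)) - (1 - phi * fst z) * dS (fst (snd z))" for z :: "real\<times>real\<times>real"
    have phE0: "phf E0 = 2 * kap" by (simp add: phf_def E0_def kap_def D_def)
    have cdS1: "isCont dS 1" using dSd[of 1] DERIV_isCont by auto
    have cph: "isCont phf E0"
    proof -
      have c1: "isCont (\<lambda>z::real\<times>real\<times>real. fst (snd z)) E0" by (intro continuous_intros)
      have c2: "isCont dS (fst (snd E0))" using cdS1 by (simp add: E0_def)
      have "isCont (\<lambda>z::real\<times>real\<times>real. dS (fst (snd z))) E0" using isCont_o2[OF c1 c2] .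
      then show ?thesis unfolding phf_def[abs_def] by (intro continuous_intros)
    qed
    obtain rho2 where rho2: "rho2 > 0" and rho2P: "\<And>z. dist z E0 < rho2 \<Longrightarrow> phf z > kap"
    proof -
      obtain d where d: "d > 0" "\<forall>z. dist z E0 < d \<longrightarrow> dist (phf z) (phf E0) < kap"
        using cph[unfolded continuous_at_eps_delta] kap by blast
      show ?thesis
      proof (rule that[OF d(1)])
        fix z assume "dist z E0 < d"
        then have "dist (phf z) (phf E0) < kap" using d(2) by blast
        then have "\<bar>phf z - 2 * kap\<bar> < kap" using phE0 by (simp add: dist_real_def)
        then show "phf z > kap" by linarith
      qed
    qed
    define ep where "ep = min rho0 rho2"
    have ep: "ep > 0" "ep \<le> rho0" "ep \<le> rho2" using rho0 rho2 by (auto simp: ep_def)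
    show ?thesis unfolding unstable_def
    proof
      assume LS: "lyapunov_stable F E0"
      obtain del where del: "del > 0" and delP: "\<forall>T y. 0 \<le> T \<and> is_solution F {0..T} y \<and> dist (y 0) E0 < del
          \<longrightarrow> (\<forall>t\<in>{0..T}. dist (y t) E0 < ep)"
        using LS ep(1) unfolding lyapunov_stable_def by blast
      define d0 where "d0 = min del ep / 2"
      have d0: "d0 > 0" "d0 < del" "d0 < ep" using del ep by (auto simp: d0_def)
      define z0 :: "real\<times>real\<times>real" where "z0 = (xs, 1, d0)"
      have dz0: "dist z0 E0 = d0" using d0 by (simp add: z0_def E0_def dist_norm zero_prod_def[symmetric] norm_Pair)
      define Gf where "Gf z = F (closest_point K z)" for z
      have KK: "closed K" "convex K" "K \<noteq> {}" using rho0 by (auto simp: K_def)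
      have GLip: "norm (Gf u - Gf v) \<le> LF * norm (u - v)" for u v
      proof -
        have "norm (Gf u - Gf v) \<le> LF * norm (closest_point K u - closest_point K v)"
          unfolding Gf_def by (rule FLip) (simp_all add: closest_point_in_set[OF KK(1) KK(3)])
        also have "\<dots> \<le> LF * norm (u - v)"
          using closest_point_lipschitz[OF KK(2,1,3), of u v] LF by (intro mult_left_mono) (auto simp: dist_norm)
        finally show ?thesis .
      qed
      define T where "T = ln (ep / d0) / kap"
      have epd: "ep / d0 > 1" using d0 by simp
      have T0: "T \<ge> 0" using epd kap by (simp add: T_def)
      obtain y where y0: "y 0 = z0" and yd: "\<forall>t\<in>{0..T}. (y has_vector_derivative Gf (y t)) (at t within {0..T})"
        using picard[OF GLip LF T0, of z0] by blast
      have cy: "continuous_on {0..T} y"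
        unfolding continuous_on_eq_continuous_within using yd has_vector_derivative_continuous by blast
      have GF: "Gf (y t) = F (y t)" if "dist (y t) E0 \<le> ep" for t
      proof -
        have "y t \<in> K" using that ep by (simp add: K_def dist_commute)
        then show ?thesis by (simp add: Gf_def closest_point_self)
      qed
      have cd: "continuous_on {0..T} (\<lambda>t. dist (y t) E0)" by (intro continuous_intros cy)
      have allin: "\<forall>t\<in>{0..T}. dist (y t) E0 < ep"
      proof (rule first_exit[OF cd _ T0])
        show "dist (y 0) E0 < ep" using y0 dz0 d0 by simp
        fix s assume s: "0 < s" "s \<le> T" and lt: "\<forall>t\<in>{0..<s}. dist (y t) E0 < ep"
        have le: "\<forall>t\<in>{0..s}. dist (y t) E0 \<le> ep"
          by (rule closure_le[OF continuous_on_subset[OF cd] s(1) lt]) (use s in auto)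
        have "is_solution F {0..s} y" unfolding is_solution_def
        proof
          fix t assume t: "t \<in> {0..s}"
          have "(y has_vector_derivative Gf (y t)) (at t within {0..T})" using yd t s by auto
          then have "(y has_vector_derivative Gf (y t)) (at t within {0..s})"
            by (rule has_vector_derivative_within_subset) (use s in auto)
          then show "(y has_vector_derivative F (y t)) (at t within {0..s})" using GF le t by simp
        qed
        moreover have "dist (y 0) E0 < del" using y0 dz0 d0 by simp
        ultimately have pre: "0 \<le> s \<and> is_solution F {0..s} y \<and> dist (y 0) E0 < del" using s by simp
        have "0 \<le> s \<and> is_solution F {0..s} y \<and> dist (y 0) E0 < del \<longrightarrow> (\<forall>t\<in>{0..s}. dist (y t) E0 < ep)"
          using delP by blast
        then have "\<forall>t\<in>{0..s}. dist (y t) E0 < ep" using pre by blast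
        then show "dist (y s) E0 < ep" using s by auto
      qed
      define nn where "nn t = snd (snd (y t))" for t
      define psi where "psi t = nn t * exp (- kap * t)" for t
      have php: "phf (y t) > kap" if "t \<in> {0..T}" for t
      proof (rule rho2P)
        have "dist (y t) E0 < ep" using allin that by blast
        then show "dist (y t) E0 < rho2" using ep by linarith
      qed
      have dn: "(nn has_real_derivative nn t * phf (y t)) (at t)" if t: "0 < t" "t < T" for t
      proof -
        have ii: "at t within {0..T} = at t" using t by (intro at_within_interior) simp
        have tT: "t \<in> {0..T}" using t by simp
        have "(y has_vector_derivative Gf (y t)) (at t within {0..T})" using yd tT by blast
        then have dyt: "(y has_vector_derivative Gf (y t)) (at t)" unfolding ii .
        have "Gf (y t) = F (y t)" using GF allin tT by (simp add: less_imp_le)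
        then have "(nn has_real_derivative snd (snd (F (y t)))) (at t)"
          using vd_comps(3)[OF dyt] unfolding nn_def[abs_def] by simp
        moreover have "snd (snd (F (y t))) = nn t * phf (y t)"
          by (simp add: Fz f3_def nn_def phf_def algebra_simps)
        ultimately show ?thesis by simp
      qed
      have cnn: "continuous_on {0..T} nn" unfolding nn_def[abs_def] by (intro continuous_intros cy)
      have cpsi: "continuous_on {0..T} psi" unfolding psi_def[abs_def] by (intro continuous_intros cnn)
      have psi0: "psi 0 = d0" by (simp add: psi_def nn_def y0 z0_def)
      have monopsi: "psi s \<ge> d0" if s: "0 \<le> s" "s \<le> T" and pp: "\<forall>t\<in>{0..<s}. psi t > d0 / 2" for s
      proof -
        have "psi 0 \<le> psi s"
        proof (rule DERIV_nonneg_imp_increasing_open[of 0 s psi])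
          show "0 \<le> s" by fact
          fix t assume t: "0 < t" "t < s"
          have "psi t > d0 / 2" using pp t by simp
          then have "psi t > 0" using d0 by linarith
          then have nnp: "nn t > 0" by (simp add: psi_def zero_less_mult_iff)
          have dexp: "((\<lambda>t. exp (- kap * t)) has_real_derivative exp (- kap * t) * (- kap)) (at t)"
            by (auto intro!: derivative_eq_intros)
          have "(psi has_real_derivative nn t * (phf (y t) - kap) * exp (- kap * t)) (at t)"
            unfolding psi_def[abs_def] using DERIV_mult[OF dn dexp] t s by (simp add: algebra_simps)
          moreover have "nn t * (phf (y t) - kap) * exp (- kap * t) \<ge> 0"
            using nnp php[of t] t s by simp
          ultimately show "\<exists>D. (psi has_real_derivative D) (at t) \<and> 0 \<le> D" by auto
        next
          show "continuous_on {0..s} psi" by (rule continuous_on_subset[OF cpsi]) (use s in auto)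
        qed
        then show ?thesis using psi0 by simp
      qed
      have cmpsi: "continuous_on {0..T} (\<lambda>t. - psi t)" by (intro continuous_intros cpsi)
      have allpsi: "\<forall>t\<in>{0..T}. - psi t < - (d0 / 2)"
      proof (rule first_exit[OF cmpsi _ T0])
        show "- psi 0 < - (d0 / 2)" using psi0 d0 by simp
        fix s assume s: "0 < s" "s \<le> T" and lt: "\<forall>t\<in>{0..<s}. - psi t < - (d0 / 2)"
        have "psi s \<ge> d0" using s lt by (intro monopsi) auto
        then show "- psi s < - (d0 / 2)" using d0 by simp
      qed
      have "psi T \<ge> d0" using allpsi T0 by (intro monopsi) auto
      moreover have "exp (kap * T) = ep / d0" using kap epd d0 ep by (simp add: T_def)
      ultimately have "nn T \<ge> ep"
      proof -
        assume A: "psi T \<ge> d0" and B: "exp (kap * T) = ep / d0"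
        have "nn T = psi T * exp (kap * T)" by (simp add: psi_def mult.assoc exp_add[symmetric])
        also have "\<dots> \<ge> d0 * (ep / d0)" unfolding B using A epd d0 by (intro mult_right_mono) auto
        finally show ?thesis using d0 by simp
      qed
      moreover have "\<bar>nn T\<bar> < ep"
      proof -
        have "\<bar>nn T\<bar> \<le> norm (y T - E0)" using comp_le(3)[of "y T - E0"] by (simp add: nn_def E0_def)
        also have "\<dots> < ep" using allin T0 by (simp add: dist_norm)
        finally show ?thesis .
      qed
      ultimately show False by linarith
    qed
  qed
  show ?thesis
  proof (intro conjI impI)
    assume "r / DD 1 xs < 1"
    then have "r < DD 1 xs" using D_pos by (simp add: divide_less_eq)
    then show "locally_asymptotically_stable F (xs, 1, 0)" using stab by (simp add: E0_def)
  next
    assume "r / DD 1 xs > 1"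
    then have "r > DD 1 xs" using D_pos by (simp add: less_divide_eq)
    then show "unstable F (xs, 1, 0)" using instab by (simp add: E0_def)
  qed
qed

end
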